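(* Let $k\ge 2$, let $\mu=1/18$, $\rho=0.25\mu^k2^{-\binom k2}$, let $d$ be the smallest positive integer such that for all $r=1,\ldots,k$, $$\frac{\mu-d^{1-2r}}{dr+1}>(1-2^{-r})^d\quad\text{and}\quad\frac{d^{2-2r}-d^{1-2r}}{d+1}>\frac{1}{2^d},$$ let $\delta=\min\{\rho/k^2,\,1/(2kd^{2k})\}$ and $\epsilon=\delta\rho/5$. Let $n$ be sufficiently large, let $T$ be a $k$-partite tournament with vertex classes $A_1,\ldots,A_k$ of size $n$ each which satisfies: for all $1\le s,\ell\le k$, all sequences $A'=(v_1,\ldots,v_q)$ of $q\le d$ distinct elements of $A_\ell$ and all $D\in\{+,-\}^q$, $|C_D(A')\cap A_s|\le n(1/2)^q+n^{2/3}$ (together with the other properties below), and let $\pi$ be any permutation of $V(T)$. Then for every $1\le r\le k$, at most $k-1$ vertices of $A_r$ are not friendly vertices. The other properties assumed of $T$ are: for all $1\le r<k$, all permutations $\pi'$, all perfect $r$-sets $P$, all $R\subseteq P$, $S\subseteq A_{r+1}$ with $|R|,|S|\ge\epsilon n$, $L_{\pi'}(P,T)$ has at least $|R||S|/2^{r+1}$ edges between $R$ and $S$; for all $1\le r<k$, all $\pi'$ and all $S_i\subseteq A_i$ with $|S_i|\ge n/18$, there are at least $0.5(1/18)^rn^r2^{-\binom r2}$ friendly $r$-cliques $\{v_1,\ldots,v_r\}$ of $L_{\pi'}(T)$ with $v_i\in S_i$; and for all $1\le r<k$, $r<t\le k$, all $\hat W=(W_1,\ldots,W_d)\in(\{+,-\}^r)^d$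 and all sequences $\hat p=(p_1,\ldots,p_d)$ of pairwise disjoint $r$-tuples with $i$-th entry in $A_i$, $|I_{\hat W}(\hat p,t)|\le n(1-1/2^r)^d+n^{2/3}$.
   Context: For a permutation (bijection) $\pi:V(T)\to\{1,\ldots,kn\}$, $L_\pi(T)$ is the spanning subgraph of $T$ consisting of all edges $(u,v)\in E(T)$ with $\pi(u)<\pi(v)$, viewed as undirected. A vertex $v\in A_r$ is a friendly vertex (with respect to $\pi$) if for every $i\ne r$, $v$ has at least $n/17$ neighbors in $A_i$ in $L_\pi(T)$. For $D\in\{+,-\}^q$ and $A'=(v_1,\ldots,v_q)$, $C_D(A')$ is the set of vertices $w$ such that for each $j$, $(v_j,w)\in E(T)$ if $D(j)=+$ and $(w,v_j)\in E(T)$ if $D(j)=-$. A perfect $r$-set is a set $P$ of $n$ pairwise disjoint $r$-tuples $(a_1,\ldots,a_r)$ with $a_i\in A_i$; $L_{\pi}(P,T)$ is the bipartite graph on $P\cup A_{r+1}$ where $p=(a_1,\ldots,a_r)\sim v$ iff $\{v,a_i\}\in E(L_{\pi}(T))$ for all $i$. An $r$-clique $\{v_1,\ldots,v_r\}$ of $L_\pi(T)$ with $v_i\in A_i$ is friendly if for every $r<t\le k$ and $1\le r'\le r$, $v_1,\ldots,v_{r'}$ have at least $n/2^{r'+1}$ common neighbors in $A_t$ in $L_\pi(T)$. $v\in A_t$ is $W$-inconsistent with $p=(a_1,\ldots,a_r)$ unless for every $i$, $(v,a_i)\in E(T)\iff W(i)=+$; $I_{\hat W}(\hat p,t)$ is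 the set of $v\in A_t$ that are $W_i$-inconsistent with $p_i$ for all $i$. *)

theory Defs
  imports Complex_Main
begin

(* Vertices are pairs (i,j); class A_i = {i} x {0..<n}; V(T) = A_1 u ... u A_k.
   The tournament T is given by its arc set E (a set of ordered pairs). *)

definition Acls :: "nat \<Rightarrow> nat \<Rightarrow> (nat \<times> nat) set" where
  "Acls n i = {i} \<times> {..<n}"

definition Vset :: "nat \<Rightarrow> nat \<Rightarrow> (nat \<times> nat) set" where
  "Vset k n = (\<Union>i\<in>{1..k}. Acls n i)"

definition multipartite_tournament ::
  "nat \<Rightarrow> nat \<Rightarrow> ((nat \<times> nat) \<times> (nat \<times> nat)) set \<Rightarrow> bool" where
  "multipartite_tournament k n E \<longleftrightarrow>
     E \<subseteq> Vset k n \<times> Vset k n \<and>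
     (\<forall>(u, v)\<in>E. fst u \<noteq> fst v) \<and>
     (\<forall>u\<in>Vset k n. \<forall>v\<in>Vset k n. fst u \<noteq> fst v \<longrightarrow> ((u, v) \<in> E \<longleftrightarrow> (v, u) \<notin> E))"

definition Ladj :: "((nat \<times> nat) \<times> (nat \<times> nat)) set \<Rightarrow> (nat \<times> nat \<Rightarrow> nat)
                    \<Rightarrow> nat \<times> nat \<Rightarrow> nat \<times> nat \<Rightarrow> bool" where
  "Ladj E \<pi> u v \<longleftrightarrow> ((u, v) \<in> E \<and> \<pi> u < \<pi> v) \<or> ((v, u) \<in> E \<and> \<pi> v < \<pi> u)"

definition is_perm :: "nat \<Rightarrow> nat \<Rightarrow> (nat \<times> nat \<Rightarrow> nat) \<Rightarrow> bool" where
  "is_perm k n \<pi> \<longleftrightarrow> bij_betw \<pi> (Vset k n) {1..k*n}"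

definition friendly_vertex ::
  "nat \<Rightarrow> nat \<Rightarrow> ((nat \<times> nat) \<times> (nat \<times> nat)) set \<Rightarrow> (nat \<times> nat \<Rightarrow> nat)
   \<Rightarrow> nat \<Rightarrow> nat \<times> nat \<Rightarrow> bool" where
  "friendly_vertex k n E \<pi> r v \<longleftrightarrow> v \<in> Acls n r \<and>
     (\<forall>i\<in>{1..k}. i \<noteq> r \<longrightarrow> real (card {w \<in> Acls n i. Ladj E \<pi> v w}) \<ge> real n / 17)"

(* C_D(A'): D as a bool list (True = +), A' = vs as a list *)
definition CD :: "((nat \<times> nat) \<times> (nat \<times> nat)) set \<Rightarrow> bool list \<Rightarrow> (nat \<times> nat) list
                  \<Rightarrow> (nat \<times> nat) set" where
  "CD E D vs = {w. \<forall>j<length vs. if D ! j then (vs ! j, w) \<in> E else (w, vs ! j) \<in> E}"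

definition is_rtuple :: "nat \<Rightarrow> nat \<Rightarrow> (nat \<times> nat) list \<Rightarrow> bool" where
  "is_rtuple n r p \<longleftrightarrow> length p = r \<and> (\<forall>i<r. p ! i \<in> Acls n (i + 1))"

definition perfect_rset :: "nat \<Rightarrow> nat \<Rightarrow> (nat \<times> nat) list set \<Rightarrow> bool" where
  "perfect_rset n r P \<longleftrightarrow> finite P \<and> card P = n \<and> (\<forall>p\<in>P. is_rtuple n r p) \<and>
     (\<forall>p\<in>P. \<forall>q\<in>P. p \<noteq> q \<longrightarrow> set p \<inter> set q = {})"

definition LPadj :: "((nat \<times> nat) \<times> (nat \<times> nat)) set \<Rightarrow> (nat \<times> nat \<Rightarrow> nat)
                    \<Rightarrow> (nat \<times> nat) list \<Rightarrow> nat \<times> nat \<Rightarrow> bool" where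
  "LPadj E \<pi> p v \<longleftrightarrow> (\<forall>i<length p. Ladj E \<pi> v (p ! i))"

definition friendly_clique ::
  "nat \<Rightarrow> nat \<Rightarrow> ((nat \<times> nat) \<times> (nat \<times> nat)) set \<Rightarrow> (nat \<times> nat \<Rightarrow> nat)
   \<Rightarrow> nat \<Rightarrow> (nat \<times> nat) list \<Rightarrow> bool" where
  "friendly_clique k n E \<pi> r vs \<longleftrightarrow> is_rtuple n r vs \<and>
     (\<forall>i<r. \<forall>j<r. i \<noteq> j \<longrightarrow> Ladj E \<pi> (vs ! i) (vs ! j)) \<and>
     (\<forall>t. r < t \<and> t \<le> k \<longrightarrow> (\<forall>r'. 1 \<le> r' \<and> r' \<le> r \<longrightarrow>
        real (card {w \<in> Acls n t. \<forall>i<r'. Ladj E \<pi> (vs ! i) w}) \<ge> real n / 2 ^ (r' + 1)))"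

(* v is NOT W-inconsistent with p, i.e. consistent; W as bool list (True = +) *)
definition W_consistent :: "((nat \<times> nat) \<times> (nat \<times> nat)) set \<Rightarrow> bool list
                           \<Rightarrow> (nat \<times> nat) list \<Rightarrow> nat \<times> nat \<Rightarrow> bool" where
  "W_consistent E W p v \<longleftrightarrow> (\<forall>i<length p. ((v, p ! i) \<in> E \<longleftrightarrow> W ! i))"

definition I_set :: "((nat \<times> nat) \<times> (nat \<times> nat)) set \<Rightarrow> nat \<Rightarrow> bool list list
                    \<Rightarrow> (nat \<times> nat) list list \<Rightarrow> nat \<Rightarrow> (nat \<times> nat) set" where
  "I_set E n Ws ps t = {v \<in> Acls n t. \<forall>i<length ps. \<not> W_consistent E (Ws ! i) (ps ! i) v}"

definition mu :: real where "mu = 1 / 18"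

definition rho :: "nat \<Rightarrow> real" where
  "rho k = 0.25 * mu ^ k * 2 powr (- real (k choose 2))"

definition dconst :: "nat \<Rightarrow> nat" where
  "dconst k = (LEAST d::nat. d > 0 \<and> (\<forall>r\<in>{1..k}.
      (mu - real d powr (1 - 2 * real r)) / (real d * real r + 1) > (1 - 2 powr (- real r)) ^ d \<and>
      (real d powr (2 - 2 * real r) - real d powr (1 - 2 * real r)) / (real d + 1) > 1 / 2 ^ d))"

definition delta :: "nat \<Rightarrow> real" where
  "delta k = min (rho k / real k ^ 2) (1 / (2 * real k * real (dconst k) ^ (2 * k)))"

definition eps :: "nat \<Rightarrow> real" where
  "eps k = delta k * rho k / 5"

definition prop_CD :: "nat \<Rightarrow> nat \<Rightarrow> nat \<Rightarrow> ((nat \<times> nat) \<times> (nat \<times> nat)) set \<Rightarrow> bool" where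
  "prop_CD k d n E \<longleftrightarrow> (\<forall>s\<in>{1..k}. \<forall>l\<in>{1..k}. \<forall>vs D.
     distinct vs \<and> set vs \<subseteq> Acls n l \<and> length vs \<le> d \<and> length D = length vs \<longrightarrow>
     real (card (CD E D vs \<inter> Acls n s)) \<le> real n * (1/2) ^ length vs + real n powr (2/3))"

definition prop_LP :: "nat \<Rightarrow> real \<Rightarrow> nat \<Rightarrow> ((nat \<times> nat) \<times> (nat \<times> nat)) set \<Rightarrow> bool" where
  "prop_LP k \<epsilon> n E \<longleftrightarrow> (\<forall>r. 1 \<le> r \<and> r < k \<longrightarrow> (\<forall>\<pi>' P R S.
     is_perm k n \<pi>' \<and> perfect_rset n r P \<and> R \<subseteq> P \<and> S \<subseteq> Acls n (r + 1) \<and>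
     real (card R) \<ge> \<epsilon> * real n \<and> real (card S) \<ge> \<epsilon> * real n \<longrightarrow>
     real (card {(p, v). p \<in> R \<and> v \<in> S \<and> LPadj E \<pi>' p v}) \<ge> real (card R) * real (card S) / 2 ^ (r + 1)))"

definition prop_cliques :: "nat \<Rightarrow> nat \<Rightarrow> ((nat \<times> nat) \<times> (nat \<times> nat)) set \<Rightarrow> bool" where
  "prop_cliques k n E \<longleftrightarrow> (\<forall>r. 1 \<le> r \<and> r < k \<longrightarrow> (\<forall>\<pi>' S.
     is_perm k n \<pi>' \<and> (\<forall>i\<in>{1..r}. S i \<subseteq> Acls n i \<and> real (card (S i)) \<ge> real n / 18) \<longrightarrow>
     real (card {vs. friendly_clique k n E \<pi>' r vs \<and> (\<forall>i<r. vs ! i \<in> S (i + 1))})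
       \<ge> 0.5 * (1/18) ^ r * real n ^ r * 2 powr (- real (r choose 2))))"

definition prop_I :: "nat \<Rightarrow> nat \<Rightarrow> nat \<Rightarrow> ((nat \<times> nat) \<times> (nat \<times> nat)) set \<Rightarrow> bool" where
  "prop_I k d n E \<longleftrightarrow> (\<forall>r t Ws ps. 1 \<le> r \<and> r < k \<and> r < t \<and> t \<le> k \<and>
     length Ws = d \<and> (\<forall>W\<in>set Ws. length W = r) \<and>
     length ps = d \<and> (\<forall>p\<in>set ps. is_rtuple n r p) \<and>
     (\<forall>i<d. \<forall>j<d. i \<noteq> j \<longrightarrow> set (ps ! i) \<inter> set (ps ! j) = {}) \<longrightarrow>
     real (card (I_set E n Ws ps t)) \<le> real n * (1 - 1 / 2 ^ r) ^ d + real n powr (2/3))"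

end

theory Submission
  imports Defs
begin

lemma pow_div_two: "(\<lambda>d::nat. real d ^ m / 2 ^ d) \<longlonglongrightarrow> 0"
proof -
  have l: "ln (2::real) > 0" by simp
  have f: "filterlim (\<lambda>d::nat. real d * ln 2) at_top sequentially"
  proof -
    have "filterlim (\<lambda>d::nat. ln 2 * real d) at_top sequentially"
      by (rule filterlim_tendsto_pos_mult_at_top[OF tendsto_const l filterlim_real_sequentially])
    then show ?thesis by (simp add: mult.commute)
  qed
  have "(\<lambda>d::nat. (real d * ln 2) ^ m / exp (real d * ln 2)) \<longlonglongrightarrow> 0"
    using filterlim_compose[OF tendsto_power_div_exp_0 f] by simp
  then have "(\<lambda>d::nat. ((real d * ln 2) ^ m / exp (real d * ln 2)) / ln 2 ^ m) \<longlonglongrightarrow> 0 / ln 2 ^ m"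
    by (intro tendsto_divide) (use l in auto)
  moreover have "exp (real d * ln 2) = 2 ^ d" for d :: nat
    by (metis exp_ln_iff exp_of_nat_mult zero_less_numeral)
  ultimately show ?thesis using l by (simp add: power_mult_distrib)
qed

lemma cond_ev:
  assumes r: "r \<ge> 1"
  shows "\<forall>\<^sub>F d in sequentially.
      (mu - real d powr (1 - 2 * real r)) / (real d * real r + 1) > (1 - 2 powr (- real r)) ^ d \<and>
      (real d powr (2 - 2 * real r) - real d powr (1 - 2 * real r)) / (real d + 1) > 1 / 2 ^ d"
proof -
  define a :: real where "a = 1 - 2 powr (- real r)"
  have a0: "0 \<le> a" unfolding a_def using r by (simp add: powr_minus_divide ge_one_powr_ge_zero)
  have a1: "a < 1" unfolding a_def by simp
  have mu: "mu > 0" by (simp add: mu_def)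
  have t1: "(\<lambda>d::nat. real d powr (1 - 2 * real r)) \<longlonglongrightarrow> 0"
    by (rule tendsto_neg_powr[OF _ filterlim_real_sequentially]) (use r in auto)
  have "(\<lambda>d::nat. real r * (of_nat d * a ^ d) + a ^ d) \<longlonglongrightarrow> real r * 0 + 0"
    by (intro tendsto_intros powser_times_n_limit_0 LIMSEQ_power_zero) (use a0 a1 in auto)
  then have t2: "(\<lambda>d::nat. a ^ d * (real d * real r + 1)) \<longlonglongrightarrow> 0"
    by (simp add: algebra_simps)
  have e1: "\<forall>\<^sub>F d in sequentially. real d powr (1 - 2 * real r) < mu / 2"
    by (rule order_tendstoD(2)[OF t1]) (use mu in simp)
  have e2: "\<forall>\<^sub>F d in sequentially. a ^ d * (real d * real r + 1) < mu / 2"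
    by (rule order_tendstoD(2)[OF t2]) (use mu in simp)
  have e3: "\<forall>\<^sub>F d in sequentially. real d ^ (2 * r) / 2 ^ d < 1"
    by (rule order_tendstoD(2)[OF pow_div_two]) simp
  have e4: "\<forall>\<^sub>F d in sequentially. d \<ge> (3::nat)"
    by (rule eventually_ge_at_top)
  show ?thesis
    using e1 e2 e3 e4
  proof eventually_elim
    case (elim d)
    have dpos: "real d > 0" using elim by simp
    have c1: "(mu - real d powr (1 - 2 * real r)) / (real d * real r + 1) > a ^ d"
    proof -
      have "a ^ d * (real d * real r + 1) < mu - real d powr (1 - 2 * real r)" using elim by linarith
      moreover have "real d * real r + 1 > 0" by (simp add: add_nonneg_pos)
      ultimately show ?thesis by (simp add: pos_less_divide_eq)
    qed
    have p: "real d powr (1 - 2 * real r) * real d ^ (2 * r) = real d"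
    proof -
      have e: "real d ^ (2 * r) = real d powr (2 * real r)" using dpos by (metis of_nat_numeral of_nat_mult powr_realpow)
      have "real d powr (1 - 2 * real r) * real d powr (2 * real r) = real d powr (1 - 2 * real r + 2 * real r)"
        by (simp only: powr_add)
      also have "\<dots> = real d" using dpos by simp
      finally show ?thesis using e by simp
    qed
    have q: "real d powr (2 - 2 * real r) = real d powr (1 - 2 * real r) * real d"
    proof -
      have "real d powr (2 - 2 * real r) = real d powr (1 - 2 * real r + 1)" by (simp add: algebra_simps)
      also have "\<dots> = real d powr (1 - 2 * real r) * real d powr 1" by (simp only: powr_add)
      also have "\<dots> = real d powr (1 - 2 * real r) * real d" using dpos by simp
      finally show ?thesis .
    qed
    define x where "x = real d powr (1 - 2 * real r)"
    define y where "y = real d ^ (2 * r)"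
    have xpos: "x > 0" unfolding x_def using dpos by simp
    have ypos: "y > 0" unfolding y_def using dpos by simp
    have xy: "x * y = real d" using p unfolding x_def y_def .
    have y2: "y < 2 ^ d" using elim(3) unfolding y_def by (simp add: divide_less_eq)
    have d3: "real d \<ge> 3" using elim by simp
    have h3: "0 \<le> (real d - 3) * (real d + 1)" using d3 by (intro mult_nonneg_nonneg) auto
    have "real d + 1 \<le> (real d - 1) * real d" using h3 by (simp add: algebra_simps)
    also have "\<dots> = (real d - 1) * x * y" using xy by simp
    also have "\<dots> < (real d - 1) * x * 2 ^ d"
      using y2 xpos d3 by (intro mult_strict_left_mono) auto
    finally have "real d + 1 < (real d - 1) * x * 2 ^ d" .
    then have c2: "(x * real d - x) / (real d + 1) > 1 / 2 ^ d"
      using dpos by (simp add: field_simps)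
    show ?case using c1 c2 q unfolding a_def x_def by simp
  qed
qed


lemma dconst_ge2:
  assumes k: "k \<ge> 1"
  shows "dconst k \<ge> 2 \<and> (\<forall>r\<in>{1..k}.
      (mu - real (dconst k) powr (1 - 2 * real r)) / (real (dconst k) * real r + 1) > (1 - 2 powr (- real r)) ^ (dconst k) \<and>
      (real (dconst k) powr (2 - 2 * real r) - real (dconst k) powr (1 - 2 * real r)) / (real (dconst k) + 1) > 1 / 2 ^ (dconst k))"
proof -
  define P where "P = (\<lambda>d::nat. d > 0 \<and> (\<forall>r\<in>{1..k}.
      (mu - real d powr (1 - 2 * real r)) / (real d * real r + 1) > (1 - 2 powr (- real r)) ^ d \<and>
      (real d powr (2 - 2 * real r) - real d powr (1 - 2 * real r)) / (real d + 1) > 1 / 2 ^ d))"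
  have ev: "\<forall>\<^sub>F d in sequentially. P d"
  proof -
    have "\<forall>\<^sub>F d in sequentially. \<forall>r\<in>{1..k}.
      (mu - real d powr (1 - 2 * real r)) / (real d * real r + 1) > (1 - 2 powr (- real r)) ^ d \<and>
      (real d powr (2 - 2 * real r) - real d powr (1 - 2 * real r)) / (real d + 1) > 1 / 2 ^ d"
      by (rule eventually_ball_finite) (auto intro: cond_ev)
    moreover have "\<forall>\<^sub>F d in sequentially. d > (0::nat)" by (rule eventually_gt_at_top)
    ultimately show ?thesis unfolding P_def by eventually_elim auto
  qed
  then obtain d where "P d" using eventually_sequentially by auto
  then have Pd: "P (dconst k)" unfolding dconst_def P_def[symmetric] by (rule LeastI)
  have "\<not> P 1" unfolding P_def using k by auto
  then have "dconst k \<noteq> 1" using Pd by auto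
  moreover have "dconst k > 0" using Pd unfolding P_def by auto
  ultimately show ?thesis using Pd unfolding P_def by auto
qed

lemma powr_small:
  assumes "n \<ge> (13824::nat)"
  shows "real n powr (2/3) \<le> real n / 24"
proof -
  have n0: "real n > 0" using assms by simp
  have "(24::real) = (24 powr 3) powr (1/3)" by (simp add: powr_powr)
  also have "\<dots> = 13824 powr (1/3)" by simp
  also have "\<dots> \<le> real n powr (1/3)" using assms by (intro powr_mono2) auto
  finally have a: "24 \<le> real n powr (1/3)" .
  have b: "real n powr (2/3) * real n powr (1/3) = real n"
    using n0 by (simp add: powr_add[symmetric])
  have c: "real n powr (2/3) \<ge> 0" by simp
  have "real n powr (2/3) * 24 \<le> real n powr (2/3) * real n powr (1/3)"
    using a c by (intro mult_left_mono) auto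
  then show ?thesis using b by simp
qed


lemma all2: "(\<forall>j<Suc (Suc 0). P j) = (P 0 \<and> P (Suc 0))" by (auto simp: less_Suc_eq)
lemma card_Acls: "card (Acls n i) = n" by (simp add: Acls_def card_cartesian_product)
lemma finite_Acls: "finite (Acls n i)" by (simp add: Acls_def)
lemma Acls_sub: "i \<in> {1..k} \<Longrightarrow> Acls n i \<subseteq> Vset k n" by (auto simp: Vset_def)
lemma Acls_fst: "w \<in> Acls n i \<Longrightarrow> fst w = i" by (auto simp: Acls_def)

lemma key:
  assumes T: "multipartite_tournament k n E" and CDp: "prop_CD k d n E" and d2: "d \<ge> 2"
    and pi: "is_perm k n \<pi>" and r: "r \<in> {1..k}" and i: "i \<in> {1..k}" and ir: "i \<noteq> r"
    and u: "u \<in> Acls n r" and v: "v \<in> Acls n r" and uv: "u \<noteq> v"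
    and cu: "real (card {w \<in> Acls n i. Ladj E \<pi> u w}) < real n / 17"
    and cv: "real (card {w \<in> Acls n i. Ladj E \<pi> v w}) < real n / 17"
    and nN: "n \<ge> 13824"
  shows False
proof -
  define A where "A = Acls n i"
  define X where "X = {w \<in> A. \<not> Ladj E \<pi> u w \<and> \<not> Ladj E \<pi> v w}"
  define Nu where "Nu = {w \<in> A. Ladj E \<pi> u w}"
  define Nv where "Nv = {w \<in> A. Ladj E \<pi> v w}"
  have fA: "finite A" unfolding A_def by (rule finite_Acls)
  have "A \<subseteq> X \<union> Nu \<union> Nv" unfolding X_def Nu_def Nv_def by auto
  then have "card A \<le> card (X \<union> Nu \<union> Nv)"
    using fA unfolding X_def Nu_def Nv_def by (intro card_mono) auto
  also have "\<dots> \<le> card X + card Nu + card Nv" by (meson card_Un_le add_le_mono le_trans order_refl)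
  finally have "real n \<le> real (card X) + real (card Nu) + real (card Nv)"
    unfolding A_def card_Acls by linarith
  then have X1: "real (card X) > real n - 2 * real n / 17"
    using cu cv unfolding Nu_def Nv_def A_def by linarith
  define c where "c = (\<pi> u < \<pi> v)"
  define C where "C = (\<lambda>D. CD E D [u, v] \<inter> A)"
  have bound: "real (card (C D)) \<le> real n / 4 + real n powr (2/3)" if "length D = 2" for D
  proof -
    have "distinct [u, v] \<and> set [u, v] \<subseteq> Acls n r \<and> length [u, v] \<le> d \<and> length D = length [u, v]"
      using uv u v d2 that by auto
    then have "real (card (CD E D [u, v] \<inter> Acls n i)) \<le> real n * (1/2) ^ length [u, v] + real n powr (2/3)"
      using CDp i r unfolding prop_CD_def by blast
    then show ?thesis unfolding C_def A_def by simp
  qed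
  have inj: "inj_on \<pi> (Vset k n)" using pi unfolding is_perm_def bij_betw_def by auto
  have uV: "u \<in> Vset k n" "v \<in> Vset k n" using u v Acls_sub[OF r] by auto
  have fu: "fst u = r" "fst v = r" using u v Acls_fst by auto
  have XC: "X \<subseteq> C [True, True] \<union> C [False, False] \<union> C [\<not> c, c]"
  proof
    fix w assume w: "w \<in> X"
    then have wA: "w \<in> A" and nu: "\<not> Ladj E \<pi> u w" and nv: "\<not> Ladj E \<pi> v w" unfolding X_def by auto
    have wV: "w \<in> Vset k n" using wA Acls_sub[OF i] unfolding A_def by auto
    have fw: "fst w = i" using wA Acls_fst unfolding A_def by auto
    have tour: "\<forall>a\<in>Vset k n. \<forall>b\<in>Vset k n. fst a \<noteq> fst b \<longrightarrow> ((a, b) \<in> E \<longleftrightarrow> (b, a) \<notin> E)"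
      using T unfolding multipartite_tournament_def by blast
    have uw: "fst u \<noteq> fst w" "fst v \<noteq> fst w" using fu fw ir by auto
    have tu: "(u, w) \<in> E \<longleftrightarrow> (w, u) \<notin> E" using tour uV(1) wV uw(1) by blast
    have tv: "(v, w) \<in> E \<longleftrightarrow> (w, v) \<notin> E" using tour uV(2) wV uw(2) by blast
    have uw2: "u \<noteq> w" "v \<noteq> w" using uw by auto
    have pu: "\<pi> u \<noteq> \<pi> w" by (rule inj_on_contraD[OF inj uw2(1) uV(1) wV])
    have pv: "\<pi> v \<noteq> \<pi> w" by (rule inj_on_contraD[OF inj uw2(2) uV(2) wV])
    have puv: "\<pi> u \<noteq> \<pi> v" by (rule inj_on_contraD[OF inj uv uV(1) uV(2)])
    have nu': "((u, w) \<in> E \<longrightarrow> \<pi> w < \<pi> u) \<and> ((u, w) \<notin> E \<longrightarrow> \<pi> u < \<pi> w)"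
      using nu tu pu unfolding Ladj_def by auto
    have nv': "((v, w) \<in> E \<longrightarrow> \<pi> w < \<pi> v) \<and> ((v, w) \<notin> E \<longrightarrow> \<pi> v < \<pi> w)"
      using nv tv pv unfolding Ladj_def by auto
    define D where "D = [(u, w) \<in> E, (v, w) \<in> E]"
    have wD: "w \<in> C D"
      unfolding C_def CD_def D_def using wA tu tv by (simp add: all2)
    have "D \<noteq> [c, \<not> c]"
      unfolding D_def c_def using nu' nv' by auto
    then have "D = [True, True] \<or> D = [False, False] \<or> D = [\<not> c, c]"
      unfolding D_def by auto
    then show "w \<in> C [True, True] \<union> C [False, False] \<union> C [\<not> c, c]" using wD by auto
  qed
  have fC: "finite (C D)" for D unfolding C_def using fA by simp
  have "card X \<le> card (C [True, True] \<union> C [False, False] \<union> C [\<not> c, c])"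
    using XC fC by (intro card_mono) auto
  also have "\<dots> \<le> card (C [True, True]) + card (C [False, False]) + card (C [\<not> c, c])"
    by (meson card_Un_le add_le_mono le_trans order_refl)
  finally have "real (card X) \<le> real (card (C [True, True])) + real (card (C [False, False])) + real (card (C [\<not> c, c]))"
    by linarith
  also have "\<dots> \<le> 3 * (real n / 4 + real n powr (2/3))"
    using bound[of "[True, True]"] bound[of "[False, False]"] bound[of "[\<not> c, c]"] by simp
  finally have X2: "real (card X) \<le> 3 * (real n / 4 + real n powr (2/3))" .
  have "real n powr (2/3) \<le> real n / 24" using powr_small nN by blast
  moreover have "real n > 0" using nN by simp
  ultimately have "real n - 2 * real n / 17 < 3 * (real n / 4 + real n / 24)" using X1 X2 by argo
  then show False using \<open>real n > 0\<close> by simp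
qed


theorem lemma4p14:
  fixes k :: nat
  assumes "k \<ge> 2"
  shows "\<exists>N. \<forall>n\<ge>N. \<forall>E \<pi>.
           multipartite_tournament k n E \<and>
           prop_CD k (dconst k) n E \<and>
           prop_LP k (eps k) n E \<and>
           prop_cliques k n E \<and>
           prop_I k (dconst k) n E \<and>
           is_perm k n \<pi>
           \<longrightarrow> (\<forall>r\<in>{1..k}. card {v \<in> Acls n r. \<not> friendly_vertex k n E \<pi> r v} \<le> k - 1)"
proof (rule exI[of _ "13824::nat"], intro allI impI ballI)
  fix n E \<pi> r
  assume nN: "(13824::nat) \<le> n"
  assume H: "multipartite_tournament k n E \<and>
           prop_CD k (dconst k) n E \<and>
           prop_LP k (eps k) n E \<and>
           prop_cliques k n E \<and>
           prop_I k (dconst k) n E \<and>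
           is_perm k n \<pi>"
  assume r: "r \<in> {1..k}"
  have d2: "dconst k \<ge> 2" using dconst_ge2[of k] assms by auto
  define B where "B = {v \<in> Acls n r. \<not> friendly_vertex k n E \<pi> r v}"
  define I where "I = {1..k} - {r}"
  have cI: "card I = k - 1" unfolding I_def using r by simp
  have bad: "\<exists>i. i \<in> I \<and> real (card {w \<in> Acls n i. Ladj E \<pi> v w}) < real n / 17" if "v \<in> B" for v
    using that unfolding B_def friendly_vertex_def I_def by (auto simp: not_le)
  define f where "f = (\<lambda>v. SOME i. i \<in> I \<and> real (card {w \<in> Acls n i. Ladj E \<pi> v w}) < real n / 17)"
  have fB: "f v \<in> I \<and> real (card {w \<in> Acls n (f v). Ladj E \<pi> v w}) < real n / 17" if "v \<in> B" for v
    unfolding f_def using someI_ex[OF bad[OF that]] .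
  show "card B \<le> k - 1"
  proof (rule ccontr)
    assume "\<not> card B \<le> k - 1"
    then have gt: "card B > card I" using cI by simp
    have "\<not> inj_on f B"
    proof
      assume "inj_on f B"
      moreover have "f ` B \<subseteq> I" using fB by auto
      moreover have "finite I" unfolding I_def by simp
      ultimately have "card B \<le> card I" by (rule card_inj_on_le)
      then show False using gt by simp
    qed
    then obtain u v where u: "u \<in> B" and v: "v \<in> B" and uv: "u \<noteq> v" and fuv: "f u = f v"
      unfolding inj_on_def by blast
    have i: "f u \<in> {1..k}" "f u \<noteq> r" using fB[OF u] unfolding I_def by auto
    show False
      apply (rule key[of k n E "dconst k" \<pi> r "f u" u v])
      using H d2 r i u v uv fB[OF u] fB[OF v] fuv nN unfolding B_def by auto
  qed
qed

end
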